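(* Let $\mathcal{G}$ be a mutant-biased fitness graph and $k$ a budget. Let $S^*\in\arg\max_{S\subseteq V,|S|\le k}\operatorname{fp}_{\mathcal{G}}(S)$ and let $S_{\mathrm{gr}}$ be the output of the Greedy algorithm. Then $\operatorname{fp}_{\mathcal{G}}(S_{\mathrm{gr}})\ge(1-1/e)\operatorname{fp}_{\mathcal{G}}(S^* )$.
   Context: A fitness graph is $\mathcal{G}=(G,(m,r))$ where $G=(V,E,w)$ is a strongly connected directed graph, $w(u,\cdot)$ is a probability distribution over out-neighbours of $u$, and $r,m\colon V\to(0,\infty)$; it is mutant-biased if $m(u)\ge r(u)$ for all $u$. For a configuration (set of mutants) $X\subseteq V$, $f_X(u)=m(u)$ if $u\in X$, else $r(u)$. The Heterogeneous Moran process starts at $\mathcal{X}_0=S$; from $\mathcal{X}_t=X$ it picks $u$ with probability $f_X(u)/\sum_v f_X(v)$, then $v$ with probability $w(u,v)$, and $v$ takes the type of $u$. $\operatorname{fp}_{\mathcal{G}}(S)$ is the probability that the process eventually reaches $V$. The Greedy algorithm starts with $S=\emptyset$ and, for $k$ iterations, adds to $S$ a node $v\notin S$ maximizing $\operatorname{fp}_{\mathcal{G}}(S\cup\{v\})$; its output is $S_{\mathrm{gr}}$. *)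

theory Defs
  imports Complex_Main
begin

definition fitness_graph ::
  "'v set \<Rightarrow> ('v \<times> 'v) set \<Rightarrow> ('v \<Rightarrow> 'v \<Rightarrow> real) \<Rightarrow> ('v \<Rightarrow> real) \<Rightarrow> ('v \<Rightarrow> real) \<Rightarrow> bool"
  where "fitness_graph V E w r m \<longleftrightarrow>
     finite V \<and> V \<noteq> {} \<and> E \<subseteq> V \<times> V \<and>
     (\<forall>u\<in>V. \<forall>v\<in>V. (u, v) \<in> E\<^sup>*) \<and>
     (\<forall>u\<in>V. \<forall>v\<in>V. ((u, v) \<in> E \<longrightarrow> w u v > 0) \<and> ((u, v) \<notin> E \<longrightarrow> w u v = 0)) \<and>
     (\<forall>u\<in>V. (\<Sum>v\<in>V. w u v) = 1) \<and>
     (\<forall>u\<in>V. r u > 0 \<and> m u > 0)"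

definition mutant_biased ::
  "'v set \<Rightarrow> ('v \<times> 'v) set \<Rightarrow> ('v \<Rightarrow> 'v \<Rightarrow> real) \<Rightarrow> ('v \<Rightarrow> real) \<Rightarrow> ('v \<Rightarrow> real) \<Rightarrow> bool"
  where "mutant_biased V E w r m \<longleftrightarrow> fitness_graph V E w r m \<and> (\<forall>u\<in>V. m u \<ge> r u)"

definition fit :: "('v \<Rightarrow> real) \<Rightarrow> ('v \<Rightarrow> real) \<Rightarrow> 'v set \<Rightarrow> 'v \<Rightarrow> real"
  where "fit r m X u = (if u \<in> X then m u else r u)"

definition moran_step :: "'v set \<Rightarrow> 'v \<Rightarrow> 'v \<Rightarrow> 'v set"
  where "moran_step X u v = (if u \<in> X then insert v X else X - {v})"

text \<open>Probability that the Heterogeneous Moran process started at X is at configuration V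
  after n steps.\<close>
primrec moran_at_full ::
  "'v set \<Rightarrow> ('v \<Rightarrow> 'v \<Rightarrow> real) \<Rightarrow> ('v \<Rightarrow> real) \<Rightarrow> ('v \<Rightarrow> real) \<Rightarrow> nat \<Rightarrow> 'v set \<Rightarrow> real"
  where
    "moran_at_full V w r m 0 X = (if X = V then 1 else 0)"
  | "moran_at_full V w r m (Suc n) X =
       (\<Sum>u\<in>V. \<Sum>v\<in>V. fit r m X u / (\<Sum>y\<in>V. fit r m X y) * w u v
                        * moran_at_full V w r m n (moran_step X u v))"

text \<open>Fixation probability: probability of eventually reaching V. Since V is absorbing,
  this is the limit of the probability of being at V after n steps.\<close>
definition fp :: "'v set \<Rightarrow> ('v \<Rightarrow> 'v \<Rightarrow> real) \<Rightarrow> ('v \<Rightarrow> real) \<Rightarrow> ('v \<Rightarrow> real) \<Rightarrow> 'v set \<Rightarrow> real"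
  where "fp V w r m S = lim (\<lambda>n. moran_at_full V w r m n S)"

text \<open>S is a possible output of the Greedy algorithm (any tie-breaking) with k iterations.\<close>
definition greedy_output :: "'v set \<Rightarrow> ('v set \<Rightarrow> real) \<Rightarrow> nat \<Rightarrow> 'v set \<Rightarrow> bool"
  where "greedy_output V f k S \<longleftrightarrow>
     (\<exists>Ss :: nat \<Rightarrow> 'v set. Ss 0 = {} \<and>
        (\<forall>i<k. \<exists>v\<in>V - Ss i. Ss (Suc i) = insert v (Ss i) \<and>
              (\<forall>u\<in>V - Ss i. f (insert u (Ss i)) \<le> f (insert v (Ss i)))) \<and>
        S = Ss k)"

end

theory Submission
  imports Defs
begin


definition monoV :: "'v set \<Rightarrow> ('v set \<Rightarrow> real) \<Rightarrow> bool" where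
  "monoV V f \<longleftrightarrow> (\<forall>A B. A \<subseteq> B \<longrightarrow> B \<subseteq> V \<longrightarrow> f A \<le> f B)"

definition submodV :: "'v set \<Rightarrow> ('v set \<Rightarrow> real) \<Rightarrow> bool" where
  "submodV V f \<longleftrightarrow> (\<forall>A B. A \<subseteq> V \<longrightarrow> B \<subseteq> V \<longrightarrow> f (A \<union> B) + f (A \<inter> B) \<le> f A + f B)"

lemma dimret:
  assumes "monoV V f" "submodV V f" "A \<subseteq> B" "B \<subseteq> V" "x \<in> V"
  shows "f (insert x B) - f B \<le> f (insert x A) - f A"
proof -
  have "insert x A \<subseteq> V" using assms by auto
  then have "f (insert x A \<union> B) + f (insert x A \<inter> B) \<le> f (insert x A) + f B"
    using assms(2,4) unfolding submodV_def by blast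
  moreover have "insert x A \<union> B = insert x B" using assms by auto
  moreover have "A \<subseteq> insert x A \<inter> B" "insert x A \<inter> B \<subseteq> V" using assms by auto
  then have "f A \<le> f (insert x A \<inter> B)"
    using assms(1) unfolding monoV_def by blast
  ultimately show ?thesis by simp
qed

lemma subadd:
  assumes "monoV V f" "submodV V f" "S \<subseteq> V" "T \<subseteq> V" "finite T"
  shows "f (S \<union> T) \<le> f S + (\<Sum>x\<in>T. f (insert x S) - f S)"
  using assms(5,4)
proof (induction T rule: finite_induct)
  case empty
  then show ?case by simp
next
  case (insert x F)
  have "f (insert x (S \<union> F)) - f (S \<union> F) \<le> f (insert x S) - f S"
    using dimret[OF assms(1,2), of S "S \<union> F" x] insert assms(3) by auto
  then show ?case using insert by simp
qed

lemma exp_bound: assumes "k > 0" shows "(1 - 1 / real k) ^ k \<le> exp (-1)"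
proof -
  have False: "k \<noteq> 0" using assms by simp
  have "1 - 1 / real k \<le> exp (- (1 / real k))" using exp_ge_add_one_self[of "- (1 / real k)"] by simp
  moreover have "0 \<le> 1 - 1 / real k" using False by (simp add: field_simps)
  ultimately have "(1 - 1 / real k) ^ k \<le> exp (- (1 / real k)) ^ k" by (rule power_mono)
  also have "\<dots> = exp (real k * (- (1 / real k)))" by (rule exp_of_nat_mult[symmetric])
  also have "\<dots> = exp (-1)" using False by simp
  finally show ?thesis .
qed

lemma greedy_bound:
  fixes f :: "'v set \<Rightarrow> real"
  assumes fin: "finite V" and mo: "monoV V f" and sm: "submodV V f" and f0: "f {} \<ge> 0"
    and so: "Sopt \<subseteq> V" and ck: "card Sopt \<le> k"
    and opt: "\<forall>S. S \<subseteq> V \<and> card S \<le> k \<longrightarrow> f S \<le> f Sopt"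
    and gr: "greedy_output V f k Sgr"
  shows "f Sgr \<ge> (1 - 1 / exp 1) * f Sopt"
proof -
  obtain Ss where S0: "Ss 0 = {}" and Sst: "\<forall>i<k. \<exists>v\<in>V - Ss i. Ss (Suc i) = insert v (Ss i) \<and>
              (\<forall>u\<in>V - Ss i. f (insert u (Ss i)) \<le> f (insert v (Ss i)))" and Sk: "Sgr = Ss k"
    using gr unfolding greedy_output_def by blast
  have finS: "finite Sopt" using fin so finite_subset by auto
  have sub: "i \<le> k \<Longrightarrow> Ss i \<subseteq> V" for i
  proof (induction i)
    case 0 then show ?case using S0 by simp
  next
    case (Suc i)
    have "\<exists>v\<in>V - Ss i. Ss (Suc i) = insert v (Ss i)" using Sst Suc.prems Suc_le_lessD by blast
    then obtain v where "v \<in> V - Ss i" "Ss (Suc i) = insert v (Ss i)" by blast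
    then show ?case using Suc by auto
  qed
  show ?thesis
  proof (cases "k = 0")
    case True
    then have "Sgr = {}" using Sk S0 by simp
    moreover have "Sopt = {}" using True ck finS by simp
    ultimately show ?thesis using f0 by (simp add: mult_left_le_one_le)
  next
    case kpos: False
  have fSopt: "f {} \<le> f Sopt" using mo so unfolding monoV_def by auto
  define d where "d i = f Sopt - f (Ss i)" for i
  have step: "d (Suc i) \<le> (1 - 1 / real k) * d i" if ik: "i < k" for i
  proof -
    obtain v where v: "v \<in> V - Ss i" "Ss (Suc i) = insert v (Ss i)"
      and best: "\<forall>u\<in>V - Ss i. f (insert u (Ss i)) \<le> f (insert v (Ss i))" using Sst ik by auto
    have SiV: "Ss i \<subseteq> V" using sub ik by simp
    have "insert v (Ss i) \<subseteq> V" using v SiV by auto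
    then have gain0: "f (Ss i) \<le> f (Ss (Suc i))" using mo v unfolding monoV_def by (metis subset_insertI)
    have "f Sopt \<le> f (Ss i \<union> Sopt)" using mo SiV so unfolding monoV_def by auto
    also have "\<dots> \<le> f (Ss i) + (\<Sum>x\<in>Sopt. f (insert x (Ss i)) - f (Ss i))"
      by (rule subadd[OF mo sm SiV so finS])
    also have "\<dots> \<le> f (Ss i) + (\<Sum>x\<in>Sopt. f (Ss (Suc i)) - f (Ss i))"
    proof -
      have "f (insert x (Ss i)) - f (Ss i) \<le> f (Ss (Suc i)) - f (Ss i)" if "x \<in> Sopt" for x
      proof (cases "x \<in> Ss i")
        case True then show ?thesis using gain0 by (simp add: insert_absorb)
      next
        case False then show ?thesis using best v that so by auto
      qed
      then have "(\<Sum>x\<in>Sopt. f (insert x (Ss i)) - f (Ss i)) \<le> (\<Sum>x\<in>Sopt. f (Ss (Suc i)) - f (Ss i))"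
        by (rule sum_mono)
      then show ?thesis by linarith
    qed
    also have "\<dots> = f (Ss i) + real (card Sopt) * (f (Ss (Suc i)) - f (Ss i))" by simp
    also have "\<dots> \<le> f (Ss i) + real k * (f (Ss (Suc i)) - f (Ss i))"
      using ck gain0 by (simp add: mult_right_mono)
    finally have "d i \<le> real k * (d i - d (Suc i))" unfolding d_def by simp
    moreover have "real k > 0" using ik by simp
    ultimately show ?thesis by (simp add: field_simps)
  qed
  have ind: "i \<le> k \<Longrightarrow> d i \<le> (1 - 1 / real k) ^ i * d 0" for i
  proof (induction i)
    case 0 then show ?case by simp
  next
    case (Suc i)
    have nn: "0 \<le> 1 - 1 / real k" using Suc by (simp add: field_simps)
    have "d (Suc i) \<le> (1 - 1 / real k) * d i" using step Suc by simp
    also have "\<dots> \<le> (1 - 1 / real k) * ((1 - 1 / real k) ^ i * d 0)"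
      using Suc nn by (simp add: mult_left_mono)
    finally show ?case by simp
  qed
  have d0: "0 \<le> d 0" "d 0 \<le> f Sopt" using fSopt f0 S0 unfolding d_def by auto
  have "d k \<le> (1 - 1 / real k) ^ k * d 0" using ind by simp
  also have "\<dots> \<le> exp (-1) * d 0" using exp_bound[of k] kpos d0 by (simp add: mult_right_mono)
  also have "\<dots> \<le> exp (-1) * f Sopt" using d0 by (simp add: mult_left_mono)
  finally have "f Sopt - f Sgr \<le> exp (-1) * f Sopt" unfolding d_def Sk .
  then show ?thesis by (simp add: exp_minus field_simps)
  qed
qed




definition Pop :: "'v set \<Rightarrow> ('v \<Rightarrow> 'v \<Rightarrow> real) \<Rightarrow> ('v \<Rightarrow> real) \<Rightarrow> ('v \<Rightarrow> real)
   \<Rightarrow> ('v set \<Rightarrow> real) \<Rightarrow> 'v set \<Rightarrow> real" where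
  "Pop V w r m f X = (\<Sum>u\<in>V. \<Sum>v\<in>V. fit r m X u / (\<Sum>y\<in>V. fit r m X y) * w u v
                        * f (moran_step X u v))"

definition g2 :: "'v set \<Rightarrow> 'v \<Rightarrow> 'v \<Rightarrow> 'v set" where
  "g2 X u v = (if u \<in> X then insert v X else X)"

definition Lop :: "'v set \<Rightarrow> ('v \<Rightarrow> 'v \<Rightarrow> real) \<Rightarrow> ('v \<Rightarrow> real) \<Rightarrow> ('v \<Rightarrow> real)
   \<Rightarrow> ('v set \<Rightarrow> real) \<Rightarrow> 'v set \<Rightarrow> real" where
  "Lop V w r m f X = (\<Sum>u\<in>V. \<Sum>v\<in>V.
      m u / (\<Sum>y\<in>V. m y) * w u v * (r u / m u) * f (moran_step X u v)
    + m u / (\<Sum>y\<in>V. m y) * w u v * (1 - r u / m u) * f (g2 X u v))"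

primrec qs :: "'v set \<Rightarrow> ('v \<Rightarrow> 'v \<Rightarrow> real) \<Rightarrow> ('v \<Rightarrow> real) \<Rightarrow> ('v \<Rightarrow> real)
   \<Rightarrow> nat \<Rightarrow> 'v set \<Rightarrow> real" where
  "qs V w r m 0 X = (if X = {} then 0 else 1)"
| "qs V w r m (Suc n) X = Lop V w r m (qs V w r m n) X"

locale mbl =
  fixes V :: "'v set" and E :: "('v \<times> 'v) set" and w :: "'v \<Rightarrow> 'v \<Rightarrow> real"
    and r m :: "'v \<Rightarrow> real"
  assumes mbias: "mutant_biased V E w r m"
begin

lemma finV: "finite V" and Vne: "V \<noteq> {}" and EV: "E \<subseteq> V \<times> V"
  and conn: "\<And>u v. u \<in> V \<Longrightarrow> v \<in> V \<Longrightarrow> (u, v) \<in> E\<^sup>*"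
  and wpos: "\<And>u v. u \<in> V \<Longrightarrow> v \<in> V \<Longrightarrow> (u, v) \<in> E \<Longrightarrow> w u v > 0"
  and wnn: "\<And>u v. u \<in> V \<Longrightarrow> v \<in> V \<Longrightarrow> w u v \<ge> 0"
  and wsum: "\<And>u. u \<in> V \<Longrightarrow> (\<Sum>v\<in>V. w u v) = 1"
  and rpos: "\<And>u. u \<in> V \<Longrightarrow> r u > 0"
  and mpos: "\<And>u. u \<in> V \<Longrightarrow> m u > 0"
  and rm: "\<And>u. u \<in> V \<Longrightarrow> r u \<le> m u"
  using mbias unfolding mutant_biased_def fitness_graph_def
  by (auto, metis less_eq_real_def)

abbreviation "P \<equiv> Pop V w r m"
abbreviation "L \<equiv> Lop V w r m"
abbreviation "F X \<equiv> (\<Sum>y\<in>V. fit r m X y)"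
abbreviation "M \<equiv> (\<Sum>y\<in>V. m y)"

lemma fitpos: "u \<in> V \<Longrightarrow> fit r m X u > 0"
  using rpos mpos by (simp add: fit_def)

lemma Fpos: "F X > 0"
  using fitpos finV Vne by (simp add: sum_pos)

lemma Mpos: "M > 0"
  using mpos finV Vne by (simp add: sum_pos)

lemma step_sub: "X \<subseteq> V \<Longrightarrow> u \<in> V \<Longrightarrow> v \<in> V \<Longrightarrow> moran_step X u v \<subseteq> V"
  by (auto simp: moran_step_def)

lemma g2_sub: "X \<subseteq> V \<Longrightarrow> u \<in> V \<Longrightarrow> v \<in> V \<Longrightarrow> g2 X u v \<subseteq> V"
  by (auto simp: g2_def)

lemma Pcoef_nn: "u \<in> V \<Longrightarrow> v \<in> V \<Longrightarrow> 0 \<le> fit r m X u / F X * w u v"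
  using fitpos[of u X] Fpos[of X] wnn[of u v] by simp

lemma Pcoef_sum: "(\<Sum>u\<in>V. \<Sum>v\<in>V. fit r m X u / F X * w u v) = 1"
proof -
  have "(\<Sum>u\<in>V. \<Sum>v\<in>V. fit r m X u / F X * w u v) = (\<Sum>u\<in>V. fit r m X u / F X * (\<Sum>v\<in>V. w u v))"
    by (simp add: sum_distrib_left)
  also have "\<dots> = (\<Sum>u\<in>V. fit r m X u / F X)" using wsum by simp
  also have "\<dots> = 1" using Fpos[of X] by (simp add: sum_divide_distrib[symmetric])
  finally show ?thesis .
qed

lemma P_const: "P (\<lambda>_. c) X = c"
proof -
  have "P (\<lambda>_. c) X = (\<Sum>u\<in>V. \<Sum>v\<in>V. fit r m X u / F X * w u v) * c"
    unfolding Pop_def by (simp add: sum_distrib_right)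
  then show ?thesis using Pcoef_sum by simp
qed

lemma P_diff: "P (\<lambda>Y. f Y - g Y) X = P f X - P g X"
  unfolding Pop_def by (simp add: right_diff_distrib sum_subtractf)

lemma P_mono:
  assumes "\<And>Y. Y \<subseteq> V \<Longrightarrow> f Y \<le> g Y" "X \<subseteq> V"
  shows "P f X \<le> P g X"
  unfolding Pop_def
  by (intro sum_mono mult_left_mono assms step_sub Pcoef_nn) auto

lemma P_V: "P f V = f V"
proof -
  have "P f V = P (\<lambda>_. f V) V"
    unfolding Pop_def by (intro sum.cong refl) (auto simp: moran_step_def insert_absorb)
  then show ?thesis by (simp add: P_const)
qed

lemma P_empty: "P f {} = f {}"
proof -
  have "P f {} = P (\<lambda>_. f {}) {}"
    unfolding Pop_def by (intro sum.cong refl) (auto simp: moran_step_def)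
  then show ?thesis by (simp add: P_const)
qed


abbreviation "p \<equiv> moran_at_full V w r m"

lemma p_Suc: "p (Suc n) X = P (p n) X"
  by (simp add: Pop_def)

declare moran_at_full.simps(2)[simp del]

lemma P_mono':
  assumes "\<And>Y. f Y \<le> g Y"
  shows "P f X \<le> P g X"
  unfolding Pop_def
  by (intro sum_mono mult_left_mono assms Pcoef_nn) auto

lemma p_bounds: "0 \<le> p n X \<and> p n X \<le> 1"
proof (induction n arbitrary: X)
  case 0 then show ?case by simp
next
  case (Suc n)
  have "P (\<lambda>_. 0) X \<le> P (p n) X" "P (p n) X \<le> P (\<lambda>_. 1) X"
    using Suc by (auto intro!: P_mono')
  then show ?case by (simp add: p_Suc P_const)
qed

lemma p_V: "p n V = 1"
  by (induction n) (auto simp: p_Suc P_V)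

lemma p_empty: "p n {} = 0"
  using Vne by (induction n) (auto simp: p_Suc P_empty)

lemma p_inc: "p n X \<le> p (Suc n) X"
proof (induction n arbitrary: X)
  case 0
  show ?case
  proof (cases "X = V")
    case True then show ?thesis using p_V by simp
  next
    case False then show ?thesis using p_bounds[of "Suc 0" X] by simp
  qed
next
  case (Suc n)
  have "P (p n) X \<le> P (p (Suc n)) X" by (rule P_mono') (rule Suc.IH)
  then show ?case by (simp only: p_Suc)
qed

lemma p_lim: "(\<lambda>n. p n X) \<longlonglongrightarrow> fp V w r m X"
proof -
  have inc: "incseq (\<lambda>n. p n X)" by (rule incseq_SucI) (rule p_inc)
  have b: "\<forall>i. p i X \<le> 1" using p_bounds by blast
  obtain Lm where Lm: "(\<lambda>n. p n X) \<longlonglongrightarrow> Lm"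
    using incseq_convergent[OF inc b] by blast
  have "fp V w r m X = Lm" unfolding fp_def using Lm by (rule limI)
  then show ?thesis using Lm by simp
qed

lemma P_tendsto:
  assumes "\<And>Y. (\<lambda>n. s n Y) \<longlonglongrightarrow> h Y"
  shows "(\<lambda>n. P (s n) X) \<longlonglongrightarrow> P h X"
  unfolding Pop_def by (intro tendsto_sum tendsto_mult_left assms)

lemma fp_harm: "P (fp V w r m) X = fp V w r m X"
proof -
  have "(\<lambda>n. p (Suc n) X) \<longlonglongrightarrow> fp V w r m X" using p_lim LIMSEQ_Suc by blast
  moreover have "(\<lambda>n. p (Suc n) X) \<longlonglongrightarrow> P (fp V w r m) X"
    unfolding p_Suc by (rule P_tendsto[OF p_lim])
  ultimately show ?thesis using LIMSEQ_unique by blast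
qed

lemma exit_edge:
  assumes "(x, y) \<in> E\<^sup>*" "x \<in> X" "y \<notin> X"
  shows "\<exists>a b. (a, b) \<in> E \<and> a \<in> X \<and> b \<notin> X"
  using assms
proof (induction rule: rtrancl_induct)
  case base then show ?case by simp
next
  case (step y z)
  then show ?case by blast
qed

lemma max_principle:
  assumes harm: "\<And>X. X \<subseteq> V \<Longrightarrow> P f X = f X" and f0: "f {} \<le> 0" and fV: "f V \<le> 0"
    and X0: "X0 \<subseteq> V"
  shows "f X0 \<le> 0"
proof (rule ccontr)
  assume "\<not> f X0 \<le> 0"
  then have pos: "f X0 > 0" by simp
  define Mx where "Mx = Max (f ` Pow V)"
  have finP: "finite (f ` Pow V)" using finV by simp
  have Mx_ge: "f Y \<le> Mx" if "Y \<subseteq> V" for Y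
  proof -
    have "f Y \<in> f ` Pow V" using that by blast
    then show ?thesis unfolding Mx_def using finP by (rule Max_ge[rotated])
  qed
  have "f ` Pow V \<noteq> {}" by blast
  then have "Mx \<in> f ` Pow V" unfolding Mx_def using finP by (intro Max_in)
  then obtain Y0 where Y0: "Y0 \<subseteq> V" "f Y0 = Mx" by blast
  define S where "S = {Y. Y \<subseteq> V \<and> f Y = Mx}"
  have "S \<subseteq> Pow V" unfolding S_def by blast
  moreover have "finite (Pow V)" using finV by simp
  ultimately have "finite S" by (rule finite_subset)
  then have finS: "finite (card ` S)" by (rule finite_imageI)
  define c where "c = Max (card ` S)"
  have "Y0 \<in> S" unfolding S_def using Y0 by blast
  then have "card ` S \<noteq> {}" by blast
  then have "c \<in> card ` S" unfolding c_def using finS by (intro Max_in)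
  then obtain X where "X \<in> S" "card X = c" by blast
  then have X: "X \<subseteq> V" "f X = Mx" "card X = c" unfolding S_def by blast+
  have cmax: "card Y \<le> c" if "Y \<subseteq> V" "f Y = Mx" for Y
  proof -
    have "card Y \<in> card ` S" unfolding S_def using that by blast
    then show ?thesis unfolding c_def using finS by (rule Max_ge[rotated])
  qed
  have Mxpos: "Mx > 0" using Mx_ge[OF X0] pos by simp
  have "X \<noteq> {}" using X f0 Mxpos by auto
  then obtain x where x: "x \<in> X" by auto
  have "X \<noteq> V" using X fV Mxpos by auto
  then obtain y where y: "y \<in> V" "y \<notin> X" using X by auto
  obtain a b where ab: "(a, b) \<in> E" "a \<in> X" "b \<notin> X"
    using exit_edge[OF conn[of x y] x y(2)] x y X by auto
  have aV: "a \<in> V" and bV: "b \<in> V" using ab EV by auto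
  have "P (\<lambda>Y. Mx - f Y) X = 0"
    using P_diff[of "\<lambda>_. Mx" f X] P_const harm[OF X(1)] X by simp
  then have "(\<Sum>u\<in>V. \<Sum>v\<in>V. fit r m X u / F X * w u v * (Mx - f (moran_step X u v))) = 0"
    unfolding Pop_def .
  moreover have nn: "0 \<le> fit r m X u / F X * w u v * (Mx - f (moran_step X u v))"
    if "u \<in> V" "v \<in> V" for u v
  proof -
    have "0 \<le> fit r m X u / F X * w u v" by (rule Pcoef_nn[OF that])
    moreover have "0 \<le> Mx - f (moran_step X u v)" using Mx_ge[OF step_sub[OF X(1) that]] by simp
    ultimately show ?thesis by (rule mult_nonneg_nonneg)
  qed
  ultimately have "\<forall>u\<in>V. (\<Sum>v\<in>V. fit r m X u / F X * w u v * (Mx - f (moran_step X u v))) = 0"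
    using finV nn by (subst (asm) sum_nonneg_eq_0_iff) (auto intro!: sum_nonneg)
  then have "(\<Sum>v\<in>V. fit r m X a / F X * w a v * (Mx - f (moran_step X a v))) = 0"
    using aV by blast
  then have "fit r m X a / F X * w a b * (Mx - f (moran_step X a b)) = 0"
    using sum_nonneg_eq_0_iff[OF finV, of "\<lambda>v. fit r m X a / F X * w a v * (Mx - f (moran_step X a v))"] nn aV bV by auto
  moreover have "fit r m X a / F X * w a b > 0"
    using fitpos[OF aV] Fpos[of X] wpos[OF aV bV ab(1)] by simp
  ultimately have "f (moran_step X a b) = Mx"
    by (metis mult_eq_0_iff less_irrefl eq_iff_diff_eq_0)
  moreover have "moran_step X a b = insert b X" using ab by (simp add: moran_step_def)
  ultimately have "f (insert b X) = Mx" by simp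
  then have "card (insert b X) \<le> c" using cmax X bV by auto
  moreover have "finite X" by (rule finite_subset[OF X(1) finV])
  then have "card (insert b X) = Suc c" by (simp add: X(3) ab(3))
  ultimately show False by simp
qed

end



context mbl
begin

abbreviation "ca u v \<equiv> m u / M * w u v * (r u / m u)"
abbreviation "cb u v \<equiv> m u / M * w u v * (1 - r u / m u)"

lemma ca_nn: "u \<in> V \<Longrightarrow> v \<in> V \<Longrightarrow> 0 \<le> ca u v"
  using mpos[of u] rpos[of u] Mpos wnn[of u v] by simp

lemma cb_nn: "u \<in> V \<Longrightarrow> v \<in> V \<Longrightarrow> 0 \<le> cb u v"
  using mpos[of u] rm[of u] Mpos wnn[of u v] by simp

lemma cab: "u \<in> V \<Longrightarrow> ca u v * a + cb u v * a = m u / M * w u v * a"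
  using mpos[of u] Mpos by (simp add: field_simps)

lemma L_const: "L (\<lambda>_. c) X = c"
proof -
  have "L (\<lambda>_. c) X = (\<Sum>u\<in>V. \<Sum>v\<in>V. m u / M * w u v * c)"
    unfolding Lop_def using cab by (intro sum.cong refl) auto
  also have "\<dots> = (\<Sum>u\<in>V. m u / M * (\<Sum>v\<in>V. w u v)) * c"
    by (simp add: sum_distrib_left sum_distrib_right mult.assoc)
  also have "\<dots> = (\<Sum>u\<in>V. m u / M) * c" using wsum by simp
  also have "\<dots> = c" using Mpos by (simp add: sum_divide_distrib[symmetric])
  finally show ?thesis .
qed

lemma L_mono':
  assumes "\<And>Y. f Y \<le> g Y"
  shows "L f X \<le> L g X"
  unfolding Lop_def
  by (intro sum_mono add_mono mult_left_mono assms ca_nn cb_nn) auto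

lemma L_V: "L f V = f V"
proof -
  have "L f V = L (\<lambda>_. f V) V"
    unfolding Lop_def by (intro sum.cong refl) (auto simp: moran_step_def g2_def insert_absorb)
  then show ?thesis by (simp add: L_const)
qed

lemma L_empty: "L f {} = f {}"
proof -
  have "L f {} = L (\<lambda>_. f {}) {}"
    unfolding Lop_def by (intro sum.cong refl) (auto simp: moran_step_def g2_def)
  then show ?thesis by (simp add: L_const)
qed

abbreviation "q \<equiv> qs V w r m"

declare qs.simps(2)[simp del]

lemma q_Suc: "q (Suc n) X = L (q n) X"
  by (simp add: qs.simps(2))

lemma q_bounds: "0 \<le> q n X \<and> q n X \<le> 1"
proof (induction n arbitrary: X)
  case 0 then show ?case by simp
next
  case (Suc n)
  have "L (\<lambda>_. 0) X \<le> L (q n) X" "L (q n) X \<le> L (\<lambda>_. 1) X"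
    using Suc by (auto intro!: L_mono')
  then show ?case by (simp add: q_Suc L_const)
qed

lemma q_V: "q n V = 1"
  using Vne by (induction n) (auto simp: q_Suc L_V)

lemma q_empty: "q n {} = 0"
  by (induction n) (auto simp: q_Suc L_empty)

lemma q_dec: "q (Suc n) X \<le> q n X"
proof (induction n arbitrary: X)
  case 0
  show ?case
  proof (cases "X = {}")
    case True then show ?thesis using q_empty[of "Suc 0"] q_empty[of 0] by simp
  next
    case False then show ?thesis using q_bounds[of "Suc 0" X] by simp
  qed
next
  case (Suc n)
  have "L (q (Suc n)) X \<le> L (q n) X" by (rule L_mono') (rule Suc.IH)
  then show ?case by (simp only: q_Suc)
qed

definition "hq X = lim (\<lambda>n. q n X)"

lemma q_lim: "(\<lambda>n. q n X) \<longlonglongrightarrow> hq X"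
proof -
  have dec: "decseq (\<lambda>n. q n X)" by (rule decseq_SucI) (rule q_dec)
  have b: "\<forall>i. 0 \<le> q i X" using q_bounds by blast
  obtain Lm where Lm: "(\<lambda>n. q n X) \<longlonglongrightarrow> Lm"
    using decseq_convergent[OF dec b] by blast
  have "hq X = Lm" unfolding hq_def using Lm by (rule limI)
  then show ?thesis using Lm by simp
qed

lemma L_tendsto:
  assumes "\<And>Y. (\<lambda>n. s n Y) \<longlonglongrightarrow> h Y"
  shows "(\<lambda>n. L (s n) X) \<longlonglongrightarrow> L h X"
  unfolding Lop_def by (intro tendsto_sum tendsto_add tendsto_mult_left assms)

lemma hq_harmL: "L hq X = hq X"
proof -
  have "(\<lambda>n. q (Suc n) X) \<longlonglongrightarrow> hq X" using q_lim LIMSEQ_Suc by blast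
  moreover have "(\<lambda>n. q (Suc n) X) \<longlonglongrightarrow> L hq X"
    unfolding q_Suc by (rule L_tendsto[OF q_lim])
  ultimately show ?thesis using LIMSEQ_unique by blast
qed

end



context mbl
begin

lemma L_P: "L f X = F X / M * P f X + (1 - F X / M) * f X"
proof -
  define S where "S u = (\<Sum>v\<in>V. w u v * f (moran_step X u v))" for u
  define T where "T = (\<Sum>u\<in>V. fit r m X u * S u)"
  have per: "(\<Sum>v\<in>V. ca u v * f (moran_step X u v) + cb u v * f (g2 X u v))
      = fit r m X u / M * S u + (m u - fit r m X u) / M * f X" if u: "u \<in> V" for u
  proof (cases "u \<in> X")
    case True
    have "(\<Sum>v\<in>V. ca u v * f (moran_step X u v) + cb u v * f (g2 X u v))
        = (\<Sum>v\<in>V. m u / M * (w u v * f (moran_step X u v)))"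
      using cab[OF u] True by (intro sum.cong refl) (simp add: g2_def moran_step_def mult.assoc)
    also have "\<dots> = fit r m X u / M * S u + (m u - fit r m X u) / M * f X"
      using True unfolding S_def by (simp add: fit_def sum_distrib_left)
    finally show ?thesis .
  next
    case False
    have "(\<Sum>v\<in>V. ca u v * f (moran_step X u v) + cb u v * f (g2 X u v))
        = (\<Sum>v\<in>V. r u / M * (w u v * f (moran_step X u v)) + (m u - r u) / M * f X * w u v)"
    proof (intro sum.cong refl)
      fix v
      show "ca u v * f (moran_step X u v) + cb u v * f (g2 X u v)
        = r u / M * (w u v * f (moran_step X u v)) + (m u - r u) / M * f X * w u v"
        using False mpos[OF u] Mpos by (simp add: g2_def field_simps)
    qed
    also have "\<dots> = r u / M * S u + (m u - r u) / M * f X * (\<Sum>v\<in>V. w u v)"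
      unfolding S_def by (simp add: sum.distrib sum_distrib_left)
    also have "\<dots> = fit r m X u / M * S u + (m u - fit r m X u) / M * f X"
      using False wsum[OF u] by (simp add: fit_def)
    finally show ?thesis .
  qed
  have "L f X = (\<Sum>u\<in>V. fit r m X u / M * S u + (m u - fit r m X u) / M * f X)"
    unfolding Lop_def using per by (intro sum.cong refl) auto
  also have "\<dots> = T / M + (M - F X) / M * f X"
    unfolding T_def by (simp add: sum.distrib sum_divide_distrib[symmetric] sum_distrib_right[symmetric]
       sum_subtractf)
  finally have L1: "L f X = T / M + (M - F X) / M * f X" .
  have "P f X = (\<Sum>u\<in>V. fit r m X u / F X * S u)"
    unfolding Pop_def S_def by (simp add: sum_distrib_left mult.assoc)
  also have "\<dots> = T / F X" unfolding T_def by (simp add: sum_divide_distrib)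
  finally have P1: "P f X = T / F X" .
  show ?thesis using L1 P1 Fpos[of X] Mpos by (simp add: field_simps)
qed

lemma hq_harm: "P hq X = hq X"
proof -
  have "hq X = F X / M * P hq X + (1 - F X / M) * hq X" using hq_harmL L_P by simp
  then have "F X / M * (P hq X - hq X) = 0" by (auto simp: algebra_simps)
  then show ?thesis using Fpos[of X] Mpos by (metis divide_eq_0_iff less_irrefl mult_eq_0_iff eq_iff_diff_eq_0)
qed

lemma fp_lim_eq: "fp V w r m {} = 0" "fp V w r m V = 1" "hq {} = 0" "hq V = 1"
proof -
  show "fp V w r m {} = 0" using p_lim[of "{}"] p_empty by (simp add: LIMSEQ_const_iff)
  show "fp V w r m V = 1" using p_lim[of V] p_V by (simp add: LIMSEQ_const_iff)
  show "hq {} = 0" using q_lim[of "{}"] q_empty by (simp add: LIMSEQ_const_iff)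
  show "hq V = 1" using q_lim[of V] q_V by (simp add: LIMSEQ_const_iff)
qed

lemma fp_eq_hq: "X \<subseteq> V \<Longrightarrow> fp V w r m X = hq X"
proof -
  assume X: "X \<subseteq> V"
  have h1: "P (\<lambda>Y. fp V w r m Y - hq Y) Y = fp V w r m Y - hq Y" for Y
    by (simp add: P_diff fp_harm hq_harm)
  have h2: "P (\<lambda>Y. hq Y - fp V w r m Y) Y = hq Y - fp V w r m Y" for Y
    by (simp add: P_diff fp_harm hq_harm)
  have "fp V w r m X - hq X \<le> 0"
    by (rule max_principle[of "\<lambda>Y. fp V w r m Y - hq Y", OF h1]) (use fp_lim_eq X in auto)
  moreover have "hq X - fp V w r m X \<le> 0"
    by (rule max_principle[of "\<lambda>Y. hq Y - fp V w r m Y", OF h2]) (use fp_lim_eq X in auto)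
  ultimately show ?thesis by simp
qed

end



lemma action:
  fixes g :: "'v set \<Rightarrow> 'v set"
  assumes gV: "\<And>A. A \<subseteq> V \<Longrightarrow> g A \<subseteq> V"
    and gm: "\<And>A B. A \<subseteq> B \<Longrightarrow> B \<subseteq> V \<Longrightarrow> g A \<subseteq> g B"
    and gu: "\<And>A B. A \<subseteq> V \<Longrightarrow> B \<subseteq> V \<Longrightarrow> g (A \<union> B) \<subseteq> g A \<union> g B"
    and gi: "\<And>A B. A \<subseteq> V \<Longrightarrow> B \<subseteq> V \<Longrightarrow> g (A \<inter> B) \<subseteq> g A \<inter> g B"
    and mo: "monoV V f" and sm: "submodV V f"
  shows "monoV V (\<lambda>X. f (g X))" "submodV V (\<lambda>X. f (g X))"
proof -
  have mo': "\<And>A B. A \<subseteq> B \<Longrightarrow> B \<subseteq> V \<Longrightarrow> f A \<le> f B"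
    using mo unfolding monoV_def by simp
  have sm': "\<And>A B. A \<subseteq> V \<Longrightarrow> B \<subseteq> V \<Longrightarrow> f (A \<union> B) + f (A \<inter> B) \<le> f A + f B"
    using sm unfolding submodV_def by simp
  show "monoV V (\<lambda>X. f (g X))"
    unfolding monoV_def
  proof (intro allI impI)
    fix A B :: "'v set" assume AB: "A \<subseteq> B" "B \<subseteq> V"
    show "f (g A) \<le> f (g B)" by (rule mo'[OF gm[OF AB] gV[OF AB(2)]])
  qed
  show "submodV V (\<lambda>X. f (g X))"
    unfolding submodV_def
  proof (intro allI impI)
    fix A B :: "'v set" assume A: "A \<subseteq> V" and B: "B \<subseteq> V"
    have gA: "g A \<subseteq> V" and gB: "g B \<subseteq> V" using gV A B by auto
    have uV: "g A \<union> g B \<subseteq> V" and iV: "g A \<inter> g B \<subseteq> V" using gA gB by auto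
    have "f (g (A \<union> B)) \<le> f (g A \<union> g B)" by (rule mo'[OF gu[OF A B] uV])
    moreover have "f (g (A \<inter> B)) \<le> f (g A \<inter> g B)" by (rule mo'[OF gi[OF A B] iV])
    moreover have "f (g A \<union> g B) + f (g A \<inter> g B) \<le> f (g A) + f (g B)" by (rule sm'[OF gA gB])
    ultimately show "f (g (A \<union> B)) + f (g (A \<inter> B)) \<le> f (g A) + f (g B)" by linarith
  qed
qed

lemma action_step:
  assumes "u \<in> V" "v \<in> V" "monoV V f" "submodV V f"
  shows "monoV V (\<lambda>X. f (moran_step X u v))" "submodV V (\<lambda>X. f (moran_step X u v))"
proof -
  have a1: "\<And>A. A \<subseteq> V \<Longrightarrow> moran_step A u v \<subseteq> V"
    using assms(1,2) unfolding moran_step_def by auto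
  have a2: "\<And>A B. A \<subseteq> B \<Longrightarrow> B \<subseteq> V \<Longrightarrow> moran_step A u v \<subseteq> moran_step B u v"
    unfolding moran_step_def by auto
  have a3: "\<And>A B. A \<subseteq> V \<Longrightarrow> B \<subseteq> V \<Longrightarrow> moran_step (A \<union> B) u v \<subseteq> moran_step A u v \<union> moran_step B u v"
    unfolding moran_step_def by auto
  have a4: "\<And>A B. A \<subseteq> V \<Longrightarrow> B \<subseteq> V \<Longrightarrow> moran_step (A \<inter> B) u v \<subseteq> moran_step A u v \<inter> moran_step B u v"
    unfolding moran_step_def by auto
  note a = a1 a2 a3 a4
  show "monoV V (\<lambda>X. f (moran_step X u v))" "submodV V (\<lambda>X. f (moran_step X u v))"
    using action[of V "\<lambda>X. moran_step X u v" f, OF a assms(3,4)] by auto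
qed

lemma action_g2:
  assumes "u \<in> V" "v \<in> V" "monoV V f" "submodV V f"
  shows "monoV V (\<lambda>X. f (g2 X u v))" "submodV V (\<lambda>X. f (g2 X u v))"
proof -
  have a: "\<And>A. A \<subseteq> V \<Longrightarrow> g2 A u v \<subseteq> V"
    "\<And>A B. A \<subseteq> B \<Longrightarrow> B \<subseteq> V \<Longrightarrow> g2 A u v \<subseteq> g2 B u v"
    "\<And>A B. A \<subseteq> V \<Longrightarrow> B \<subseteq> V \<Longrightarrow> g2 (A \<union> B) u v \<subseteq> g2 A u v \<union> g2 B u v"
    "\<And>A B. A \<subseteq> V \<Longrightarrow> B \<subseteq> V \<Longrightarrow> g2 (A \<inter> B) u v \<subseteq> g2 A u v \<inter> g2 B u v"
    using assms(1,2) unfolding g2_def by auto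
  show "monoV V (\<lambda>X. f (g2 X u v))" "submodV V (\<lambda>X. f (g2 X u v))"
    using action[of V "\<lambda>X. g2 X u v" f, OF a assms(3,4)] by auto
qed

context mbl
begin

lemma L_pres:
  assumes mo: "monoV V f" and sm: "submodV V f"
  shows "monoV V (L f) \<and> submodV V (L f)"
proof
  show "monoV V (L f)"
    unfolding monoV_def
  proof (intro allI impI)
    fix A B :: "'v set" assume AB: "A \<subseteq> B" "B \<subseteq> V"
    show "L f A \<le> L f B"
      unfolding Lop_def
    proof (intro sum_mono add_mono mult_left_mono ca_nn cb_nn)
      fix u v assume uv: "u \<in> V" "v \<in> V"
      show "f (moran_step A u v) \<le> f (moran_step B u v)"
        by (rule action_step(1)[OF uv mo sm, unfolded monoV_def, rule_format, OF AB])
      show "f (g2 A u v) \<le> f (g2 B u v)"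
        by (rule action_g2(1)[OF uv mo sm, unfolded monoV_def, rule_format, OF AB])
    qed
  qed
  show "submodV V (L f)"
    unfolding submodV_def
  proof (intro allI impI)
    fix A B :: "'v set" assume A: "A \<subseteq> V" and B: "B \<subseteq> V"
    have trm: "ca u v * f (moran_step (A \<union> B) u v) + cb u v * f (g2 (A \<union> B) u v)
        + (ca u v * f (moran_step (A \<inter> B) u v) + cb u v * f (g2 (A \<inter> B) u v))
      \<le> ca u v * f (moran_step A u v) + cb u v * f (g2 A u v)
        + (ca u v * f (moran_step B u v) + cb u v * f (g2 B u v))" if uv: "u \<in> V" "v \<in> V" for u v
    proof -
      have s1: "f (moran_step (A \<union> B) u v) + f (moran_step (A \<inter> B) u v)
          \<le> f (moran_step A u v) + f (moran_step B u v)"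
        by (rule action_step(2)[OF uv mo sm, unfolded submodV_def, rule_format, OF A B])
      have s2: "f (g2 (A \<union> B) u v) + f (g2 (A \<inter> B) u v) \<le> f (g2 A u v) + f (g2 B u v)"
        by (rule action_g2(2)[OF uv mo sm, unfolded submodV_def, rule_format, OF A B])
      have "ca u v * (f (moran_step (A \<union> B) u v) + f (moran_step (A \<inter> B) u v))
          \<le> ca u v * (f (moran_step A u v) + f (moran_step B u v))"
        using s1 ca_nn[OF uv] by (rule mult_left_mono)
      moreover have "cb u v * (f (g2 (A \<union> B) u v) + f (g2 (A \<inter> B) u v))
          \<le> cb u v * (f (g2 A u v) + f (g2 B u v))"
        using s2 cb_nn[OF uv] by (rule mult_left_mono)
      ultimately show ?thesis unfolding distrib_left by linarith
    qed
    have "L f (A \<union> B) + L f (A \<inter> B) = (\<Sum>u\<in>V. \<Sum>v\<in>V.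
        ca u v * f (moran_step (A \<union> B) u v) + cb u v * f (g2 (A \<union> B) u v)
        + (ca u v * f (moran_step (A \<inter> B) u v) + cb u v * f (g2 (A \<inter> B) u v)))"
      unfolding Lop_def by (simp add: sum.distrib)
    also have "\<dots> \<le> (\<Sum>u\<in>V. \<Sum>v\<in>V.
        ca u v * f (moran_step A u v) + cb u v * f (g2 A u v)
        + (ca u v * f (moran_step B u v) + cb u v * f (g2 B u v)))"
      by (intro sum_mono trm)
    also have "\<dots> = L f A + L f B"
      unfolding Lop_def by (simp add: sum.distrib)
    finally show "L f (A \<union> B) + L f (A \<inter> B) \<le> L f A + L f B" .
  qed
qed

lemma q_pres: "monoV V (q n) \<and> submodV V (q n)"
proof (induction n)
  case 0
  have "monoV V (q 0)" unfolding monoV_def by auto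
  moreover have "submodV V (q 0)" unfolding submodV_def by auto
  ultimately show ?case by (rule conjI)
next
  case (Suc n)
  have "q (Suc n) = L (q n)" by (rule ext) (rule q_Suc)
  then show ?case using L_pres Suc by simp
qed

lemma hq_pres: "monoV V hq" "submodV V hq"
proof -
  show "monoV V hq" unfolding monoV_def
  proof (intro allI impI)
    fix A B :: "'v set" assume AB: "A \<subseteq> B" "B \<subseteq> V"
    have "\<forall>n. q n A \<le> q n B"
      using q_pres[THEN conjunct1, unfolded monoV_def, rule_format, OF AB] by blast
    then have "\<exists>N. \<forall>n\<ge>N. q n A \<le> q n B" by blast
    then show "hq A \<le> hq B" by (rule LIMSEQ_le[OF q_lim[of A] q_lim[of B]])
  qed
  show "submodV V hq" unfolding submodV_def
  proof (intro allI impI)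
    fix A B :: "'v set" assume AB: "A \<subseteq> V" "B \<subseteq> V"
    have "\<forall>n. q n (A \<union> B) + q n (A \<inter> B) \<le> q n A + q n B"
      using q_pres[THEN conjunct2, unfolded submodV_def, rule_format, OF AB] by blast
    then have "\<exists>N. \<forall>n\<ge>N. q n (A \<union> B) + q n (A \<inter> B) \<le> q n A + q n B" by blast
    then show "hq (A \<union> B) + hq (A \<inter> B) \<le> hq A + hq B"
      by (rule LIMSEQ_le[OF tendsto_add[OF q_lim q_lim] tendsto_add[OF q_lim q_lim]])
  qed
qed

lemma fp_pres: "monoV V (fp V w r m)" "submodV V (fp V w r m)"
proof -
  show "monoV V (fp V w r m)" unfolding monoV_def
  proof (intro allI impI)
    fix A B :: "'v set" assume AB: "A \<subseteq> B" "B \<subseteq> V"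
    then have "A \<subseteq> V" by blast
    then show "fp V w r m A \<le> fp V w r m B"
      using AB hq_pres(1) fp_eq_hq unfolding monoV_def by simp
  qed
  show "submodV V (fp V w r m)" unfolding submodV_def
  proof (intro allI impI)
    fix A B :: "'v set" assume AB: "A \<subseteq> V" "B \<subseteq> V"
    then have "A \<union> B \<subseteq> V" "A \<inter> B \<subseteq> V" by blast+
    then show "fp V w r m (A \<union> B) + fp V w r m (A \<inter> B) \<le> fp V w r m A + fp V w r m B"
      using AB hq_pres(2) fp_eq_hq unfolding submodV_def by simp
  qed
qed

end

theorem theorem3:
  fixes V :: "'v set" and E :: "('v \<times> 'v) set" and w :: "'v \<Rightarrow> 'v \<Rightarrow> real"
    and r m :: "'v \<Rightarrow> real" and k :: nat and Sopt Sgr :: "'v set"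
  assumes "mutant_biased V E w r m"
    and "Sopt \<subseteq> V" and "card Sopt \<le> k"
    and "\<forall>S. S \<subseteq> V \<and> card S \<le> k \<longrightarrow> fp V w r m S \<le> fp V w r m Sopt"
    and "greedy_output V (fp V w r m) k Sgr"
  shows "fp V w r m Sgr \<ge> (1 - 1 / exp 1) * fp V w r m Sopt"
proof -
  interpret mbl V E w r m by unfold_locales (rule assms(1))
  show ?thesis
    by (rule greedy_bound[OF finV fp_pres(1) fp_pres(2) _ assms(2-5)]) (simp add: fp_lim_eq)
qed


end
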